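(* Fix an integer $n\ge 1$, real numbers $c_1<c_2<\cdots<c_n$ and a real number $\epsilon$. On $\mathbb{R}^3$ with coordinates $(x,y,z)$ put $\rho=\sqrt{x^2+y^2}$, $r_j=\sqrt{x^2+y^2+(z-c_j)^2}$ and $$V_\epsilon=\frac{\epsilon}{2}+\frac12\sum_{j=1}^n\frac{1}{r_j},\qquad \alpha=-\frac12\sum_{j=1}^n\frac{x\,dy-y\,dx}{r_j\,(r_j-z+c_j)},$$ defined on $U=\mathbb{R}^3\setminus\{(0,0,z): z\ge c_1\}$. On $U\times S^1$, with $\varphi$ the angular coordinate on $S^1$, let $$g_\epsilon=\frac{1}{V_\epsilon}(d\varphi+\alpha)^2+V_\epsilon\,(dx^2+dy^2+dz^2),\qquad \omega_\epsilon=(d\varphi+\alpha)\wedge dz+V_\epsilon\,dx\wedge dy,$$ considered on the open subset $W$ of $U\times S^1$ where $V_\epsilon\neq 0$ and $\rho>0$. Define the complex-valued functions $$z_1=\prod_{j=1}^n\bigl(r_j-(z-c_j)\bigr)^{1/2}\,e^{-\frac{\epsilon}{2}z+\sqrt{-1}\,\varphi},\qquad z_2=x+\sqrt{-1}\,y,$$ and set $S=\sum_{j=1}^n\frac{r_j+z-c_j}{r_j}$. Then on $W$, $$g_\epsilon=\frac{1}{V_\epsilon}\frac{dz_1}{z_1}\frac{d\bar z_1}{\bar z_1}-\frac{S}{2V_\epsilon}\Bigl(\frac{dz_1}{z_1}\frac{d\bar z_2}{\bar z_2}+\frac{dz_2}{z_2}\frac{d\bar z_1}{\bar z_1}\Bigr)+\Bigl[V_\epsilon\rho^2+\frac{S^2}{4V_\epsilon}\Bigr]\frac{dz_2}{z_2}\frac{d\bar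 z_2}{\bar z_2},$$ $$\omega_\epsilon=\frac{\sqrt{-1}}{2}\Bigl(\frac{1}{V_\epsilon}\frac{dz_1}{z_1}\wedge\frac{d\bar z_1}{\bar z_1}-\frac{S}{2V_\epsilon}\Bigl(\frac{dz_1}{z_1}\wedge\frac{d\bar z_2}{\bar z_2}+\frac{dz_2}{z_2}\wedge\frac{d\bar z_1}{\bar z_1}\Bigr)+\Bigl[V_\epsilon\rho^2+\frac{S^2}{4V_\epsilon}\Bigr]\frac{dz_2}{z_2}\wedge\frac{d\bar z_2}{\bar z_2}\Bigr).$$
   Context: For $\epsilon>0$, $g_\epsilon$ is the (toric) multi-Taub-NUT metric; for $\epsilon=0$ it is the Gibbons–Hawking metric; for $\epsilon<0$ it is a Riemannian metric where $V_\epsilon>0$ and minus a Riemannian metric where $V_\epsilon<0$. The functions $z_1,z_2$ are holomorphic for the complex structure whose $(1,0)$-forms are spanned by $dx+\sqrt{-1}\,dy$ and $(d\varphi+\alpha)+\sqrt{-1}\,V_\epsilon\,dz$. In the formula for $g_\epsilon$, a product $ab$ of two (complex) $1$-forms denotes the symmetric product $\tfrac12(a\otimes b+b\otimes a)$, so that e.g. $(dx+\sqrt{-1}dy)(dx-\sqrt{-1}dy)=dx^2+dy^2$; $dx^2$ means $dx\,dx$. *)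

theory Defs
  imports "HOL-Analysis.Analysis"
begin

text \<open>Points of U x S^1 are written (x,y,z,phi) with phi a real (covering) angular
coordinate; tangent vectors are (vx,vy,vz,vphi).  The centres are c 1 < ... < c n.\<close>

type_synonym pt = "real \<times> real \<times> real \<times> real"

definition rj :: "(nat \<Rightarrow> real) \<Rightarrow> nat \<Rightarrow> real \<Rightarrow> real \<Rightarrow> real \<Rightarrow> real" where
  "rj c j x y z = sqrt (x\<^sup>2 + y\<^sup>2 + (z - c j)\<^sup>2)"

definition Veps :: "real \<Rightarrow> nat \<Rightarrow> (nat \<Rightarrow> real) \<Rightarrow> real \<Rightarrow> real \<Rightarrow> real \<Rightarrow> real" where
  "Veps eps n c x y z = eps / 2 + 1/2 * (\<Sum>j=1..n. 1 / rj c j x y z)"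

definition rho :: "real \<Rightarrow> real \<Rightarrow> real" where
  "rho x y = sqrt (x\<^sup>2 + y\<^sup>2)"

definition alpha :: "nat \<Rightarrow> (nat \<Rightarrow> real) \<Rightarrow> pt \<Rightarrow> pt \<Rightarrow> real" where
  "alpha n c p v = (case p of (x,y,z,_) \<Rightarrow> case v of (vx,vy,_,_) \<Rightarrow>
     - 1/2 * (\<Sum>j=1..n. (x * vy - y * vx) / (rj c j x y z * (rj c j x y z - z + c j))))"

definition theta :: "nat \<Rightarrow> (nat \<Rightarrow> real) \<Rightarrow> pt \<Rightarrow> pt \<Rightarrow> real" where
  "theta n c p v = snd (snd (snd v)) + alpha n c p v"

definition geps :: "real \<Rightarrow> nat \<Rightarrow> (nat \<Rightarrow> real) \<Rightarrow> pt \<Rightarrow> pt \<Rightarrow> pt \<Rightarrow> real" where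
  "geps eps n c p v w = (case p of (x,y,z,_) \<Rightarrow> case v of (vx,vy,vz,_) \<Rightarrow> case w of (wx,wy,wz,_) \<Rightarrow>
     1 / Veps eps n c x y z * (theta n c p v * theta n c p w)
     + Veps eps n c x y z * (vx * wx + vy * wy + vz * wz))"

text \<open>Wedge convention: (a \<and> b)(v,w) = a(v) b(w) - a(w) b(v).\<close>
definition omegaeps :: "real \<Rightarrow> nat \<Rightarrow> (nat \<Rightarrow> real) \<Rightarrow> pt \<Rightarrow> pt \<Rightarrow> pt \<Rightarrow> real" where
  "omegaeps eps n c p v w = (case p of (x,y,z,_) \<Rightarrow> case v of (vx,vy,vz,_) \<Rightarrow> case w of (wx,wy,wz,_) \<Rightarrow>
     (theta n c p v * wz - theta n c p w * vz) + Veps eps n c x y z * (vx * wy - wx * vy))"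

definition Udom :: "(nat \<Rightarrow> real) \<Rightarrow> pt set" where
  "Udom c = {(x,y,z,phi). \<not> (x = 0 \<and> y = 0 \<and> z \<ge> c 1)}"

definition Wdom :: "real \<Rightarrow> nat \<Rightarrow> (nat \<Rightarrow> real) \<Rightarrow> pt set" where
  "Wdom eps n c = {(x,y,z,phi). (x,y,z,phi) \<in> Udom c \<and> Veps eps n c x y z \<noteq> 0 \<and> rho x y > 0}"

definition z1 :: "real \<Rightarrow> nat \<Rightarrow> (nat \<Rightarrow> real) \<Rightarrow> pt \<Rightarrow> complex" where
  "z1 eps n c p = (case p of (x,y,z,phi) \<Rightarrow>
     complex_of_real ((\<Prod>j=1..n. sqrt (rj c j x y z - (z - c j))) * exp (- eps / 2 * z))
     * exp (\<i> * complex_of_real phi))"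

definition z2 :: "pt \<Rightarrow> complex" where
  "z2 p = (case p of (x,y,_,_) \<Rightarrow> Complex x y)"

definition Ssum :: "nat \<Rightarrow> (nat \<Rightarrow> real) \<Rightarrow> real \<Rightarrow> real \<Rightarrow> real \<Rightarrow> real" where
  "Ssum n c x y z = (\<Sum>j=1..n. (rj c j x y z + z - c j) / rj c j x y z)"

definition symp :: "(pt \<Rightarrow> complex) \<Rightarrow> (pt \<Rightarrow> complex) \<Rightarrow> pt \<Rightarrow> pt \<Rightarrow> complex" where
  "symp a b v w = (a v * b w + a w * b v) / 2"

definition wedge :: "(pt \<Rightarrow> complex) \<Rightarrow> (pt \<Rightarrow> complex) \<Rightarrow> pt \<Rightarrow> pt \<Rightarrow> complex" where
  "wedge a b v w = a v * b w - a w * b v"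

end

theory Submission imports Defs begin

abbreviation X :: "pt \<Rightarrow> real" where "X q \<equiv> fst q"
abbreviation Y :: "pt \<Rightarrow> real" where "Y q \<equiv> fst (snd q)"
abbreviation Z :: "pt \<Rightarrow> real" where "Z q \<equiv> fst (snd (snd q))"
abbreviation PH :: "pt \<Rightarrow> real" where "PH q \<equiv> snd (snd (snd q))"

lemma rj_pos: "x^2+y^2 > 0 \<Longrightarrow> rj c j x y z > 0"
  unfolding rj_def by (simp add: add_pos_nonneg)

lemma u_pos: "x^2+y^2 > 0 \<Longrightarrow> rj c j x y z - (z - c j) > 0"
proof -
  assume h: "x^2+y^2 > 0"
  have "\<bar>z - c j\<bar> = sqrt ((z - c j)^2)" by simp
  also have "... < rj c j x y z" unfolding rj_def using h by (intro real_sqrt_less_mono) simp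
  finally show ?thesis by linarith
qed

lemma rj_deriv:
  assumes "x^2+y^2 > 0"
  shows "((\<lambda>q::pt. rj c j (X q) (Y q) (Z q)) has_derivative
     (\<lambda>v. (x*X v + y*Y v + (z - c j)*Z v)/rj c j x y z)) (at (x,y,z,phi))"
proof -
  have d: "((\<lambda>q::pt. (X q)^2 + (Y q)^2 + (Z q - c j)^2) has_derivative
     (\<lambda>v. 2*x*X v + 2*y*Y v + 2*(z - c j)*Z v)) (at (x,y,z,phi))"
    by (auto intro!: derivative_eq_intros simp: field_simps)
  have p: "0 < (X (x,y,z,phi))^2 + (Y (x,y,z,phi))^2 + (Z (x,y,z,phi) - c j)^2"
    using assms by (simp add: add_pos_nonneg)
  show ?thesis unfolding rj_def
    apply (rule has_derivative_eq_rhs[OF has_derivative_real_sqrt[OF p d]])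
    apply (rule ext) using p apply (simp add: field_simps add_pos_nonneg)
    done
qed


lemma h_deriv:
  assumes "x^2+y^2 > 0"
  shows "((\<lambda>q::pt. sqrt (rj c j (X q) (Y q) (Z q) - (Z q - c j))) has_derivative
     (\<lambda>v. sqrt (rj c j x y z - (z - c j)) *
        (((x*X v + y*Y v + (z - c j)*Z v)/rj c j x y z - Z v) / (2 * (rj c j x y z - (z - c j))))))
     (at (x,y,z,phi))"
proof -
  have d: "((\<lambda>q::pt. rj c j (X q) (Y q) (Z q) - (Z q - c j)) has_derivative
     (\<lambda>v. (x*X v + y*Y v + (z - c j)*Z v)/rj c j x y z - Z v)) (at (x,y,z,phi))"
    by (auto intro!: derivative_eq_intros rj_deriv[OF assms])
  have p: "0 < rj c j (X (x,y,z,phi)) (Y (x,y,z,phi)) (Z (x,y,z,phi)) - (Z (x,y,z,phi) - c j)"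
    using u_pos[OF assms] by simp
  have sq: "sqrt u * (E / (2*u)) = E * (inverse (sqrt u) / 2)" if "u > 0" for u E :: real
  proof -
    have t: "sqrt u > 0" using that by simp
    have "u = sqrt u * sqrt u" using that by simp
    then have "sqrt u * (E / (2*u)) = sqrt u * (E / (2*(sqrt u * sqrt u)))" by simp
    also have "... = E * (inverse (sqrt u) / 2)" using t by (simp add: field_simps)
    finally show ?thesis .
  qed
  show ?thesis
    apply (rule has_derivative_eq_rhs[OF has_derivative_real_sqrt[OF p d]])
    apply (rule ext) apply simp using sq[OF u_pos[OF assms, of c j z]] by simp
qed

lemma termL0:
  fixes r u w A Zv :: real
  assumes "r > 0" "u > 0" "w > 0"
  shows "((A + (r - u)*Zv)/r - Zv) / (2*u) = A * (w/r) / (2*(u*w)) - Zv * (1/r) / 2"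
  using assms by (simp add: field_simps)

lemma termA0:
  fixes r u w A :: real
  assumes "r > 0" "u > 0" "w > 0"
  shows "A / (r * u) = A * (w/r) / (u*w)"
  using assms by (simp add: field_simps)

lemma Rfact:
  fixes r u R zc :: real
  assumes "u = r - zc" "u > 0" "r^2 = R + zc^2" "R > 0"
  shows "R = u * (r + zc)" "r + zc > 0"
proof -
  have "R = r^2 - zc^2" using assms(3) by linarith
  also have "... = (r - zc) * (r + zc)" by (simp add: power2_eq_square algebra_simps)
  finally show R: "R = u * (r + zc)" using assms(1) by simp
  show "r + zc > 0" using R assms(2,4) by (metis zero_less_mult_pos)
qed

lemma termL:
  fixes r u R zc A Zv :: real
  assumes "r > 0" "u = r - zc" "u > 0" "r^2 = R + zc^2" "R > 0"
  shows "((A + zc*Zv)/r - Zv) / (2*u) = A * ((r + zc)/r) / (2*R) - Zv * (1/r) / 2"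
  using termL0[OF assms(1,3) Rfact(2)[OF assms(2-5)], of A Zv] Rfact(1)[OF assms(2-5)] assms(2)
  by simp

lemma termA:
  fixes r u R zc A :: real
  assumes "r > 0" "u = r - zc" "u > 0" "r^2 = R + zc^2" "R > 0"
  shows "A / (r * u) = A * ((r + zc)/r) / R"
  using termA0[OF assms(1,3) Rfact(2)[OF assms(2-5)], of A] Rfact(1)[OF assms(2-5)]
  by simp


definition ell :: "(nat \<Rightarrow> real) \<Rightarrow> nat \<Rightarrow> real \<Rightarrow> real \<Rightarrow> real \<Rightarrow> pt \<Rightarrow> real" where
  "ell c j x y z v = ((x*X v + y*Y v + (z - c j)*Z v)/rj c j x y z - Z v) / (2 * (rj c j x y z - (z - c j)))"

lemma P_deriv:
  assumes "x^2+y^2 > 0"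
  shows "((\<lambda>q::pt. \<Prod>j\<in>{1..n}. sqrt (rj c j (X q) (Y q) (Z q) - (Z q - c j))) has_derivative
     (\<lambda>v. (\<Prod>j\<in>{1..n}. sqrt (rj c j x y z - (z - c j))) * (\<Sum>j\<in>{1..n}. ell c j x y z v)))
     (at (x,y,z,phi))"
proof -
  let ?h = "\<lambda>j (q::pt). sqrt (rj c j (X q) (Y q) (Z q) - (Z q - c j))"
  have D: "((\<lambda>q. \<Prod>j\<in>{1..n}. ?h j q) has_derivative
     (\<lambda>v. \<Sum>i\<in>{1..n}. (sqrt (rj c i x y z - (z - c i)) * ell c i x y z v) * (\<Prod>j\<in>{1..n} - {i}. ?h j (x,y,z,phi))))
     (at (x,y,z,phi))"
    by (rule has_derivative_prod[of "{1..n}" ?h]) (use h_deriv[OF assms] in \<open>simp add: ell_def\<close>)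
  show ?thesis
  proof (rule has_derivative_eq_rhs[OF D], rule ext)
    fix v
    show "(\<Sum>i\<in>{1..n}. (sqrt (rj c i x y z - (z - c i)) * ell c i x y z v) * (\<Prod>j\<in>{1..n} - {i}. ?h j (x,y,z,phi)))
      = (\<Prod>j\<in>{1..n}. sqrt (rj c j x y z - (z - c j))) * (\<Sum>j\<in>{1..n}. ell c j x y z v)"
      unfolding sum_distrib_left
    proof (rule sum.cong[OF refl])
      fix i assume i: "i \<in> {1..n}"
      have "(\<Prod>j\<in>{1..n}. sqrt (rj c j x y z - (z - c j))) =
        sqrt (rj c i x y z - (z - c i)) * (\<Prod>j\<in>{1..n} - {i}. sqrt (rj c j x y z - (z - c j)))"
        using i by (simp add: prod.remove)
      then show "(sqrt (rj c i x y z - (z - c i)) * ell c i x y z v) * (\<Prod>j\<in>{1..n} - {i}. ?h j (x,y,z,phi))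
        = (\<Prod>j\<in>{1..n}. sqrt (rj c j x y z - (z - c j))) * ell c i x y z v"
        by simp
    qed
  qed
qed


lemma z1_eq: "z1 eps n c = (\<lambda>q. complex_of_real ((\<Prod>j\<in>{1..n}. sqrt (rj c j (X q) (Y q) (Z q) - (Z q - c j)))
     * exp (- eps / 2 * Z q)) * exp (\<i> * complex_of_real (PH q)))"
  by (rule ext) (simp add: z1_def split: prod.splits)

lemma z1_deriv:
  assumes "x^2+y^2 > 0"
  shows "(z1 eps n c has_derivative
     (\<lambda>v. z1 eps n c (x,y,z,phi) * (complex_of_real ((\<Sum>j\<in>{1..n}. ell c j x y z v) - eps/2 * Z v)
        + \<i> * complex_of_real (PH v)))) (at (x,y,z,phi))"
proof -
  let ?P = "\<lambda>q::pt. \<Prod>j\<in>{1..n}. sqrt (rj c j (X q) (Y q) (Z q) - (Z q - c j))"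
  have Ed: "((\<lambda>q::pt. exp (- eps / 2 * Z q)) has_derivative (\<lambda>v. exp (- eps / 2 * z) * (- eps / 2 * Z v))) (at (x,y,z,phi))"
    by (auto intro!: derivative_eq_intros)
  have Cd: "((\<lambda>q::pt. exp (\<i> * complex_of_real (PH q))) has_derivative
      (\<lambda>v. exp (\<i> * complex_of_real phi) * (\<i> * complex_of_real (PH v)))) (at (x,y,z,phi))"
  proof -
    have i: "((\<lambda>q::pt. \<i> * complex_of_real (PH q)) has_derivative (\<lambda>v. \<i> * complex_of_real (PH v))) (at (x,y,z,phi))"
      by (auto intro!: derivative_eq_intros)
    have o: "(exp has_derivative (*) (exp (\<i> * complex_of_real phi))) (at (\<i> * complex_of_real (PH (x,y,z,phi))))"
      using DERIV_exp[unfolded has_field_derivative_def] by simp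
    show ?thesis using has_derivative_compose[OF i o] by (simp add: mult.commute)
  qed
  note Fd = has_derivative_mult[OF P_deriv[where n=n and c=c and phi=phi, OF assms] Ed]
  note Gd = has_derivative_mult[OF has_derivative_of_real[OF Fd] Cd]
  show ?thesis unfolding z1_eq
    apply (rule has_derivative_eq_rhs[OF Gd])
    apply (rule ext)
    apply (simp add: algebra_simps)
    done
qed


lemma core_g:
  fixes V R S Av Aw Bv Bw zv zw pv pw xv xw yv yw :: real
  assumes V: "V \<noteq> 0" and hxy: "xv*xw + yv*yw = R*(Av*Aw+Bv*Bw)"
  shows "complex_of_real (1 / V * ((pv - S/2*Bv) * (pw - S/2*Bw)) + V * (xv*xw + yv*yw + zv*zw)) =
    complex_of_real (1/V) * (((complex_of_real (S/2*Av - V*zv) + \<i> * complex_of_real pv) * (complex_of_real (S/2*Aw - V*zw) - \<i> * complex_of_real pw)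
       + (complex_of_real (S/2*Aw - V*zw) + \<i> * complex_of_real pw) * (complex_of_real (S/2*Av - V*zv) - \<i> * complex_of_real pv)) / 2)
    - complex_of_real (S / (2*V)) * (((complex_of_real (S/2*Av - V*zv) + \<i> * complex_of_real pv) * (complex_of_real Aw - \<i> * complex_of_real Bw)
       + (complex_of_real (S/2*Aw - V*zw) + \<i> * complex_of_real pw) * (complex_of_real Av - \<i> * complex_of_real Bv)) / 2
       + ((complex_of_real Av + \<i> * complex_of_real Bv) * (complex_of_real (S/2*Aw - V*zw) - \<i> * complex_of_real pw)
       + (complex_of_real Aw + \<i> * complex_of_real Bw) * (complex_of_real (S/2*Av - V*zv) - \<i> * complex_of_real pv)) / 2)
    + complex_of_real (V * R + S^2/(4*V)) * (((complex_of_real Av + \<i> * complex_of_real Bv) * (complex_of_real Aw - \<i> * complex_of_real Bw)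
       + (complex_of_real Aw + \<i> * complex_of_real Bw) * (complex_of_real Av - \<i> * complex_of_real Bv)) / 2)"
  using V hxy by (simp add: complex_eq_iff field_simps power2_eq_square)

lemma core_w:
  fixes V R S Av Aw Bv Bw zv zw pv pw xv xw yv yw :: real
  assumes V: "V \<noteq> 0" and hxy: "xv*yw - xw*yv = R*(Av*Bw-Aw*Bv)"
  shows "complex_of_real (((pv - S/2*Bv) * zw - (pw - S/2*Bw) * zv) + V * (xv*yw - xw*yv)) =
    \<i> / 2 * (complex_of_real (1/V) * ((complex_of_real (S/2*Av - V*zv) + \<i> * complex_of_real pv) * (complex_of_real (S/2*Aw - V*zw) - \<i> * complex_of_real pw)
       - (complex_of_real (S/2*Aw - V*zw) + \<i> * complex_of_real pw) * (complex_of_real (S/2*Av - V*zv) - \<i> * complex_of_real pv))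
    - complex_of_real (S / (2*V)) * (((complex_of_real (S/2*Av - V*zv) + \<i> * complex_of_real pv) * (complex_of_real Aw - \<i> * complex_of_real Bw)
       - (complex_of_real (S/2*Aw - V*zw) + \<i> * complex_of_real pw) * (complex_of_real Av - \<i> * complex_of_real Bv))
       + ((complex_of_real Av + \<i> * complex_of_real Bv) * (complex_of_real (S/2*Aw - V*zw) - \<i> * complex_of_real pw)
       - (complex_of_real Aw + \<i> * complex_of_real Bw) * (complex_of_real (S/2*Av - V*zv) - \<i> * complex_of_real pv)))
    + complex_of_real (V * R + S^2/(4*V)) * ((complex_of_real Av + \<i> * complex_of_real Bv) * (complex_of_real Aw - \<i> * complex_of_real Bw)
       - (complex_of_real Aw + \<i> * complex_of_real Bw) * (complex_of_real Av - \<i> * complex_of_real Bv)))"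
  using V hxy apply (simp add: complex_eq_iff field_simps power2_eq_square)
  apply (drule arg_cong[where f="\<lambda>t. V*V*V*V*16384*t"])
  apply (simp add: algebra_simps)
  done


lemma geps_eq: "geps eps n c (x,y,z,phi) v w = 1 / Veps eps n c x y z * (theta n c (x,y,z,phi) v * theta n c (x,y,z,phi) w)
   + Veps eps n c x y z * (X v * X w + Y v * Y w + Z v * Z w)"
  by (simp add: geps_def split: prod.splits)

lemma omega_eq: "omegaeps eps n c (x,y,z,phi) v w = (theta n c (x,y,z,phi) v * Z w - theta n c (x,y,z,phi) w * Z v)
   + Veps eps n c x y z * (X v * Y w - X w * Y v)"
  by (simp add: omegaeps_def split: prod.splits)

lemma alpha_eq: "alpha n c (x,y,z,phi) v = - 1/2 * (\<Sum>j=1..n. (x * Y v - y * X v) / (rj c j x y z * (rj c j x y z - z + c j)))"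
  by (simp add: alpha_def split: prod.splits)

lemma rj_sq: "(rj c j x y z)^2 = (x^2+y^2) + (z - c j)^2"
  unfolding rj_def by (simp add: add_nonneg_nonneg)

lemma z2_deriv: "(z2 has_derivative (\<lambda>v. Complex (X v) (Y v))) (at p)"
proof -
  have e: "z2 = (\<lambda>q. complex_of_real (X q) + \<i> * complex_of_real (Y q))"
    by (rule ext) (simp add: z2_def Complex_eq split: prod.splits)
  show ?thesis unfolding e
    by (rule has_derivative_eq_rhs, (rule derivative_intros)+) (simp add: Complex_eq)
qed

theorem mainTheorem1:
  fixes n :: nat and c :: "nat \<Rightarrow> real" and eps :: real
  assumes "n \<ge> 1"
    and "\<And>i j. 1 \<le> i \<Longrightarrow> i < j \<Longrightarrow> j \<le> n \<Longrightarrow> c i < c j"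
  shows "\<forall>x y z phi. (x,y,z,phi) \<in> Wdom eps n c \<longrightarrow>
    (let p = (x,y,z,phi); V = Veps eps n c x y z; S = Ssum n c x y z;
         R = (rho x y)\<^sup>2 in
     \<exists>D1 D2.
       (z1 eps n c has_derivative D1) (at p) \<and>
       (z2 has_derivative D2) (at p) \<and>
       (let a1 = (\<lambda>v. D1 v / z1 eps n c p); b1 = (\<lambda>v. cnj (D1 v) / cnj (z1 eps n c p));
            a2 = (\<lambda>v. D2 v / z2 p); b2 = (\<lambda>v. cnj (D2 v) / cnj (z2 p)) in
        (\<forall>v w. complex_of_real (geps eps n c p v w) =
            complex_of_real (1 / V) * symp a1 b1 v w
          - complex_of_real (S / (2 * V)) * (symp a1 b2 v w + symp a2 b1 v w)
          + complex_of_real (V * R + S\<^sup>2 / (4 * V)) * symp a2 b2 v w) \<and>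
        (\<forall>v w. complex_of_real (omegaeps eps n c p v w) =
            \<i> / 2 * (complex_of_real (1 / V) * wedge a1 b1 v w
          - complex_of_real (S / (2 * V)) * (wedge a1 b2 v w + wedge a2 b1 v w)
          + complex_of_real (V * R + S\<^sup>2 / (4 * V)) * wedge a2 b2 v w))))"
proof (intro allI impI)
  fix x y z phi
  assume W: "(x,y,z,phi) \<in> Wdom eps n c"
  have hxy: "x^2+y^2 > 0" using W by (simp add: Wdom_def rho_def)
  have Vne: "Veps eps n c x y z \<noteq> 0" using W by (simp add: Wdom_def)
  define R where "R = x^2+y^2"
  have Rr: "(rho x y)^2 = R" unfolding R_def rho_def by simp
  define V where "V = Veps eps n c x y z"
  define S where "S = Ssum n c x y z"
  have Rpos: "R > 0" using hxy R_def by simp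
  have ellsum: "(\<Sum>j\<in>{1..n}. ell c j x y z v) - eps/2 * Z v = S/2 * ((x * X v + y * Y v)/R) - V * Z v" for v
  proof -
    have t: "ell c j x y z v = (x * X v + y * Y v) / (2*R) * ((rj c j x y z + z - c j) / rj c j x y z)
        - Z v / 2 * (1 / rj c j x y z)" for j
      using termL[OF rj_pos[OF hxy, of c j z] refl u_pos[OF hxy, of c j z] rj_sq[of c j x y z, unfolded R_def[symmetric]] Rpos,
          of "x * X v + y * Y v" "Z v"]
      unfolding ell_def by (simp add: algebra_simps)
    show ?thesis unfolding t sum_subtractf S_def V_def Veps_def Ssum_def sum_distrib_left[symmetric]
      by (simp add: algebra_simps)
  qed
  define Af where "Af v = (x * X v + y * Y v)/R" for v :: pt
  define Bf where "Bf v = (x * Y v - y * X v)/R" for v :: pt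
  have alph: "alpha n c (x,y,z,phi) v = - (S/2 * Bf v)" for v
  proof -
    have t: "(x * Y v - y * X v) / (rj c j x y z * (rj c j x y z - z + c j)) =
       (x * Y v - y * X v) / R * ((rj c j x y z + z - c j) / rj c j x y z)" for j
      using termA[OF rj_pos[OF hxy, of c j z] refl u_pos[OF hxy, of c j z] rj_sq[of c j x y z, unfolded R_def[symmetric]] Rpos,
          of "x * Y v - y * X v"]
      by (simp add: algebra_simps)
    show ?thesis unfolding alpha_eq t sum_distrib_left[symmetric] S_def Ssum_def Bf_def by simp
  qed
  have thet: "theta n c (x,y,z,phi) v = PH v - S/2 * Bf v" for v
    unfolding theta_def alph by simp
  have Ppos: "(\<Prod>j\<in>{1..n}. sqrt (rj c j x y z - (z - c j))) > 0"
    by (rule prod_pos) (use u_pos[OF hxy] in \<open>simp del: diff_diff_eq2\<close>)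
  have z1ne: "z1 eps n c (x,y,z,phi) \<noteq> 0"
    using Ppos by (simp add: z1_def del: prod_zero_iff of_real_prod)
  define D1 where "D1 v = z1 eps n c (x,y,z,phi) * (complex_of_real ((\<Sum>j\<in>{1..n}. ell c j x y z v) - eps/2 * Z v)
        + \<i> * complex_of_real (PH v))" for v
  define D2 where "D2 v = Complex (X v) (Y v)" for v :: pt
  have dD1: "(z1 eps n c has_derivative D1) (at (x,y,z,phi))"
    unfolding D1_def[abs_def] by (rule z1_deriv[OF hxy])
  have dD2: "(z2 has_derivative D2) (at (x,y,z,phi))"
    unfolding D2_def[abs_def] by (rule z2_deriv)
  have a1: "D1 v / z1 eps n c (x,y,z,phi) = complex_of_real (S/2 * Af v - V * Z v) + \<i> * complex_of_real (PH v)" for v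
    using z1ne unfolding D1_def ellsum Af_def by simp
  have b1: "cnj (D1 v) / cnj (z1 eps n c (x,y,z,phi)) = complex_of_real (S/2 * Af v - V * Z v) - \<i> * complex_of_real (PH v)" for v
    using z1ne unfolding D1_def ellsum Af_def by simp
  have zne: "Complex x y \<noteq> 0" using hxy by (auto simp: complex_eq_iff)
  have mul: "(complex_of_real (Af v) + \<i> * complex_of_real (Bf v)) * Complex x y = Complex (X v) (Y v)" for v
    using Rpos by (simp add: complex_eq_iff Af_def Bf_def field_simps) (simp add: R_def power2_eq_square algebra_simps)
  have a2: "D2 v / z2 (x,y,z,phi) = complex_of_real (Af v) + \<i> * complex_of_real (Bf v)" for v
    unfolding D2_def z2_def using zne mul[of v] by (simp add: divide_eq_eq)
  have b2: "cnj (D2 v) / cnj (z2 (x,y,z,phi)) = complex_of_real (Af v) - \<i> * complex_of_real (Bf v)" for v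
  proof -
    have "cnj (D2 v) / cnj (z2 (x,y,z,phi)) = cnj (D2 v / z2 (x,y,z,phi))" by simp
    then show ?thesis unfolding a2 by simp
  qed
  have hg: "X v * X w + Y v * Y w = R * (Af v * Af w + Bf v * Bf w)" for v w
  proof -
    have num: "(x*X v+y*Y v)*(x*X w+y*Y w) + (x*Y v-y*X v)*(x*Y w-y*X w) = R*(X v * X w + Y v * Y w)"
      by (simp add: R_def power2_eq_square algebra_simps)
    have "Af v * Af w + Bf v * Bf w = ((x*X v+y*Y v)*(x*X w+y*Y w) + (x*Y v-y*X v)*(x*Y w-y*X w)) / (R*R)"
      using Rpos by (simp add: Af_def Bf_def field_simps)
    then show ?thesis unfolding num using Rpos by simp
  qed
  have hw: "X v * Y w - X w * Y v = R * (Af v * Bf w - Af w * Bf v)" for v w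
  proof -
    have num: "(x*X v+y*Y v)*(x*Y w-y*X w) - (x*X w+y*Y w)*(x*Y v-y*X v) = R*(X v * Y w - X w * Y v)"
      by (simp add: R_def power2_eq_square algebra_simps)
    have "Af v * Bf w - Af w * Bf v = ((x*X v+y*Y v)*(x*Y w-y*X w) - (x*X w+y*Y w)*(x*Y v-y*X v)) / (R*R)"
      using Rpos by (simp add: Af_def Bf_def field_simps)
    then show ?thesis unfolding num using Rpos by simp
  qed
  have G: "complex_of_real (geps eps n c (x,y,z,phi) v w) =
            complex_of_real (1 / V) * symp (\<lambda>v. D1 v / z1 eps n c (x,y,z,phi)) (\<lambda>v. cnj (D1 v) / cnj (z1 eps n c (x,y,z,phi))) v w
          - complex_of_real (S / (2 * V)) * (symp (\<lambda>v. D1 v / z1 eps n c (x,y,z,phi)) (\<lambda>v. cnj (D2 v) / cnj (z2 (x,y,z,phi))) v w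
               + symp (\<lambda>v. D2 v / z2 (x,y,z,phi)) (\<lambda>v. cnj (D1 v) / cnj (z1 eps n c (x,y,z,phi))) v w)
          + complex_of_real (V * R + S\<^sup>2 / (4 * V)) * symp (\<lambda>v. D2 v / z2 (x,y,z,phi)) (\<lambda>v. cnj (D2 v) / cnj (z2 (x,y,z,phi))) v w" for v w
    unfolding symp_def a1 b1 a2 b2 geps_eq thet V_def[symmetric]
    by (rule core_g[OF Vne[folded V_def] hg])
  have O: "complex_of_real (omegaeps eps n c (x,y,z,phi) v w) =
            \<i> / 2 * (complex_of_real (1 / V) * wedge (\<lambda>v. D1 v / z1 eps n c (x,y,z,phi)) (\<lambda>v. cnj (D1 v) / cnj (z1 eps n c (x,y,z,phi))) v w
          - complex_of_real (S / (2 * V)) * (wedge (\<lambda>v. D1 v / z1 eps n c (x,y,z,phi)) (\<lambda>v. cnj (D2 v) / cnj (z2 (x,y,z,phi))) v w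
               + wedge (\<lambda>v. D2 v / z2 (x,y,z,phi)) (\<lambda>v. cnj (D1 v) / cnj (z1 eps n c (x,y,z,phi))) v w)
          + complex_of_real (V * R + S\<^sup>2 / (4 * V)) * wedge (\<lambda>v. D2 v / z2 (x,y,z,phi)) (\<lambda>v. cnj (D2 v) / cnj (z2 (x,y,z,phi))) v w)" for v w
    unfolding wedge_def a1 b1 a2 b2 omega_eq thet V_def[symmetric]
    by (rule core_w[OF Vne[folded V_def] hw])
  show "let p = (x,y,z,phi); V = Veps eps n c x y z; S = Ssum n c x y z; R = (rho x y)\<^sup>2 in
     \<exists>D1 D2.
       (z1 eps n c has_derivative D1) (at p) \<and>
       (z2 has_derivative D2) (at p) \<and>
       (let a1 = (\<lambda>v. D1 v / z1 eps n c p); b1 = (\<lambda>v. cnj (D1 v) / cnj (z1 eps n c p));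
            a2 = (\<lambda>v. D2 v / z2 p); b2 = (\<lambda>v. cnj (D2 v) / cnj (z2 p)) in
        (\<forall>v w. complex_of_real (geps eps n c p v w) =
            complex_of_real (1 / V) * symp a1 b1 v w
          - complex_of_real (S / (2 * V)) * (symp a1 b2 v w + symp a2 b1 v w)
          + complex_of_real (V * R + S\<^sup>2 / (4 * V)) * symp a2 b2 v w) \<and>
        (\<forall>v w. complex_of_real (omegaeps eps n c p v w) =
            \<i> / 2 * (complex_of_real (1 / V) * wedge a1 b1 v w
          - complex_of_real (S / (2 * V)) * (wedge a1 b2 v w + wedge a2 b1 v w)
          + complex_of_real (V * R + S\<^sup>2 / (4 * V)) * wedge a2 b2 v w)))"
    unfolding Let_def Rr V_def[symmetric] S_def[symmetric]
    using dD1 dD2 G O by blast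
qed

end
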